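(* Fix $n\ge1$ and a real number $\kappa>0$. Let $\ell_1,\dots,\ell_m\in\{1,\dots,n\}$ ($m\ge 0$) and put $U=A^{(\ell_1)}\odot\cdots\odot A^{(\ell_m)}$ (with $U=E$ if $m=0$), $U=(u_{i,j})$. Then for all $1\le i\le j\le n$, $$u_{i,j}=\kappa\cdot N_{i,j},$$ where $N_{i,j}$ is the maximal length of a nondecreasing subsequence of $[\ell_1,\dots,\ell_m]$ all of whose terms lie in $\{i,i+1,\dots,j\}$ (with $N_{i,j}=0$ if there is none); and $u_{i,j}=-\infty$ for $i>j$.
   Context: Tropical (max-plus) semiring: $\mathbb T=\mathbb R\cup\{-\infty\}$ with $a\oplus b=\max(a,b)$, $a\odot b=a+b$; tropical matrix product $(A\odot B)_{i,j}=\max_t(a_{i,t}+b_{t,j})$, tropical matrix sum is entrywise max. For $\ell\in\{1,\dots,n\}$, $A^{(\ell)}$ is the $n\times n$ tropical matrix with $A^{(\ell)}_{i,j}=\kappa$ if $i\le\ell\le j$, $A^{(\ell)}_{i,j}=0$ if $i\le j$ but not $i\le \ell\le j$, and $A^{(\ell)}_{i,j}=-\infty$ if $i>j$. $E$ is the $n\times n$ matrix with $E_{i,j}=0$ for $i\le j$ and $-\infty$ for $i>j$. Subsequences are taken by positions. *)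

theory Defs
  imports "HOL-Library.Extended_Real"
begin

text \<open>Tropical (max-plus) values are modelled in ereal; only finite values and
  -infinity occur. n x n matrices are functions nat => nat => ereal, indices 1..n.\<close>

type_synonym tmat = "nat \<Rightarrow> nat \<Rightarrow> ereal"

definition trop_mult :: "nat \<Rightarrow> tmat \<Rightarrow> tmat \<Rightarrow> tmat" where
  "trop_mult n A B = (\<lambda>i j. Max ((\<lambda>t. A i t + B t j) ` {1..n}))"

definition Amat :: "real \<Rightarrow> nat \<Rightarrow> tmat" where
  "Amat \<kappa> l = (\<lambda>i j. if i \<le> j then (if i \<le> l \<and> l \<le> j then ereal \<kappa> else 0) else -\<infinity>)"

definition Emat :: tmat where
  "Emat = (\<lambda>i j. if i \<le> j then 0 else -\<infinity>)"

fun trop_prod :: "nat \<Rightarrow> real \<Rightarrow> nat list \<Rightarrow> tmat" where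
  "trop_prod n \<kappa> [] = Emat"
| "trop_prod n \<kappa> [l] = Amat \<kappa> l"
| "trop_prod n \<kappa> (l # l' # ls) = trop_mult n (Amat \<kappa> l) (trop_prod n \<kappa> (l' # ls))"

definition Nlen :: "nat list \<Rightarrow> nat \<Rightarrow> nat \<Rightarrow> nat" where
  "Nlen ls i j = Max {length s | s. s \<in> set (subseqs ls) \<and> sorted s \<and> (\<forall>x\<in>set s. i \<le> x \<and> x \<le> j)}"

end

theory Submission
  imports Defs
begin

lemma nil_subseqs: "[] \<in> set (subseqs xs)"
  by (induction xs) (auto simp: Let_def)

lemma set_subseqs_Cons:
  "set (subseqs (x # xs)) = Cons x ` set (subseqs xs) \<union> set (subseqs xs)"
  by (simp add: Let_def)

definition TT :: "nat list \<Rightarrow> nat \<Rightarrow> nat \<Rightarrow> nat set" where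
  "TT ls i j = {length s | s. s \<in> set (subseqs ls) \<and> sorted s \<and> (\<forall>x\<in>set s. i \<le> x \<and> x \<le> j)}"

lemma TT_fin: "finite (TT ls i j)"
proof -
  have "TT ls i j \<subseteq> length ` set (subseqs ls)" unfolding TT_def by auto
  then show ?thesis by (rule finite_subset) simp
qed

lemma TT_ne: "0 \<in> TT ls i j"
  unfolding TT_def using nil_subseqs by force

lemma Nlen_TT: "Nlen ls i j = Max (TT ls i j)"
  unfolding Nlen_def TT_def by simp

lemma Nlen_ge:
  assumes "s \<in> set (subseqs ls)" "sorted s" "\<forall>x\<in>set s. i \<le> x \<and> x \<le> j"
  shows "length s \<le> Nlen ls i j"
  unfolding Nlen_TT by (rule Max_ge[OF TT_fin]) (use assms in \<open>auto simp: TT_def\<close>)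

lemma Nlen_wit:
  "\<exists>s. s \<in> set (subseqs ls) \<and> sorted s \<and> (\<forall>x\<in>set s. i \<le> x \<and> x \<le> j) \<and> length s = Nlen ls i j"
proof -
  have "Max (TT ls i j) \<in> TT ls i j" using TT_ne[of ls i j] by (intro Max_in TT_fin) blast
  then show ?thesis unfolding Nlen_TT TT_def by auto
qed

lemma Nlen_mono: "i \<le> i' \<Longrightarrow> Nlen ls i' j \<le> Nlen ls i j"
proof -
  assume "i \<le> i'"
  obtain s where "s \<in> set (subseqs ls)" "sorted s" "\<forall>x\<in>set s. i' \<le> x \<and> x \<le> j" "length s = Nlen ls i' j"
    using Nlen_wit by blast
  then show ?thesis using Nlen_ge[of s ls i j] \<open>i \<le> i'\<close> by force
qed

lemma Nlen_Cons:
  "Nlen (l # rest) i j = max (Nlen rest i j) (if i \<le> l \<and> l \<le> j then Suc (Nlen rest l j) else 0)"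
proof (rule antisym)
  obtain s where s: "s \<in> set (subseqs (l#rest))" "sorted s" "\<forall>x\<in>set s. i \<le> x \<and> x \<le> j"
    "length s = Nlen (l#rest) i j"
    using Nlen_wit by blast
  show "Nlen (l # rest) i j \<le> max (Nlen rest i j) (if i \<le> l \<and> l \<le> j then Suc (Nlen rest l j) else 0)"
  proof (cases "s \<in> set (subseqs rest)")
    case True
    then show ?thesis using Nlen_ge[of s rest i j] s by auto
  next
    case False
    then obtain s' where s': "s = l # s'" "s' \<in> set (subseqs rest)" using s(1)
      unfolding set_subseqs_Cons by auto
    have "length s' \<le> Nlen rest l j"
      using s s' by (intro Nlen_ge) auto
    then show ?thesis using s s' by auto
  qed
next
  have a: "Nlen rest i j \<le> Nlen (l # rest) i j"
  proof -
    obtain s where "s \<in> set (subseqs rest)" "sorted s" "\<forall>x\<in>set s. i \<le> x \<and> x \<le> j"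
      "length s = Nlen rest i j" using Nlen_wit by blast
    then show ?thesis using Nlen_ge[of s "l#rest" i j] unfolding set_subseqs_Cons by auto
  qed
  have b: "Suc (Nlen rest l j) \<le> Nlen (l # rest) i j" if "i \<le> l" "l \<le> j"
  proof -
    obtain s where "s \<in> set (subseqs rest)" "sorted s" "\<forall>x\<in>set s. l \<le> x \<and> x \<le> j"
      "length s = Nlen rest l j" using Nlen_wit by blast
    moreover have "\<forall>x\<in>set s. i \<le> x" using calculation that by force
    ultimately show ?thesis using Nlen_ge[of "l#s" "l#rest" i j] that unfolding set_subseqs_Cons by auto
  qed
  show "max (Nlen rest i j) (if i \<le> l \<and> l \<le> j then Suc (Nlen rest l j) else 0) \<le> Nlen (l # rest) i j"
    using a b by auto
qed

definition ind :: "bool \<Rightarrow> nat" where "ind b = (if b then 1 else 0)"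

lemma comb_le:
  assumes "i \<le> t" "t \<le> j"
  shows "ind (i \<le> l \<and> l \<le> t) + Nlen rest t j \<le> Nlen (l # rest) i j"
proof (cases "i \<le> l \<and> l \<le> t")
  case True
  then show ?thesis using Nlen_mono[of l t rest j] assms unfolding Nlen_Cons ind_def by auto
next
  case False
  then show ?thesis using Nlen_mono[of i t rest j] assms unfolding Nlen_Cons ind_def by auto
qed

lemma comb_ex:
  assumes "i \<le> j"
  shows "\<exists>t. i \<le> t \<and> t \<le> j \<and> ind (i \<le> l \<and> l \<le> t) + Nlen rest t j = Nlen (l # rest) i j"
proof (cases "i \<le> l \<and> l \<le> j")
  case True
  show ?thesis
  proof (cases "Nlen rest i j \<ge> Suc (Nlen rest l j)")
    case c: True
    show ?thesis
    proof (cases "l = i")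
      case True
      then show ?thesis using c by auto
    next
      case False
      then show ?thesis using c True assms by (intro exI[of _ i]) (auto simp: Nlen_Cons ind_def)
    qed
  next
    case False
    then show ?thesis using True by (intro exI[of _ l]) (auto simp: Nlen_Cons ind_def)
  qed
next
  case False
  then show ?thesis using assms by (intro exI[of _ i]) (auto simp: Nlen_Cons ind_def)
qed

definition good :: "nat \<Rightarrow> real \<Rightarrow> nat list \<Rightarrow> tmat \<Rightarrow> bool" where
  "good n \<kappa> ls M \<longleftrightarrow> (\<forall>i j. 1 \<le> i \<and> i \<le> j \<and> j \<le> n \<longrightarrow> M i j = ereal (\<kappa> * real (Nlen ls i j)))
       \<and> (\<forall>i j. 1 \<le> j \<and> j < i \<and> i \<le> n \<longrightarrow> M i j = -\<infinity>)"

lemma good_cong: "good n \<kappa> ls M \<Longrightarrow> (\<And>i j. 1 \<le> i \<Longrightarrow> i \<le> n \<Longrightarrow> 1 \<le> j \<Longrightarrow> j \<le> n \<Longrightarrow> M' i j = M i j)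
   \<Longrightarrow> good n \<kappa> ls M'"
  unfolding good_def by force

lemma good_E: "good n \<kappa> [] Emat"
  unfolding good_def Emat_def Nlen_TT TT_def by simp

lemma good_ninf: "good n \<kappa> ls M \<Longrightarrow> 1 \<le> t \<Longrightarrow> t \<le> n \<Longrightarrow> 1 \<le> j \<Longrightarrow> j \<le> n \<Longrightarrow> M t j \<noteq> \<infinity>"
  unfolding good_def by (cases "t \<le> j") auto

lemma good_step:
  assumes g: "good n \<kappa> rest V" and k: "\<kappa> > 0" and l: "1 \<le> l" "l \<le> n"
  shows "good n \<kappa> (l # rest) (trop_mult n (Amat \<kappa> l) V)"
  unfolding good_def
proof (intro conjI allI impI)
  fix i j assume ij: "1 \<le> i \<and> i \<le> j \<and> j \<le> n"
  have val: "Amat \<kappa> l i t + V t j = ereal (\<kappa> * real (ind (i \<le> l \<and> l \<le> t) + Nlen rest t j))"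
    if "i \<le> t" "t \<le> j" for t
    using g that ij unfolding good_def Amat_def ind_def by (auto simp: algebra_simps)
  show "trop_mult n (Amat \<kappa> l) V i j = ereal (\<kappa> * real (Nlen (l # rest) i j))"
    unfolding trop_mult_def
  proof (rule Max_eqI)
    fix y assume "y \<in> (\<lambda>t. Amat \<kappa> l i t + V t j) ` {1..n}"
    then obtain t where t: "1 \<le> t" "t \<le> n" "y = Amat \<kappa> l i t + V t j" by auto
    show "y \<le> ereal (\<kappa> * real (Nlen (l # rest) i j))"
    proof (cases "t < i")
      case True
      have "V t j \<noteq> \<infinity>" using good_ninf[OF g] t ij by auto
      then show ?thesis using t True by (cases "V t j") (auto simp: Amat_def)
    next
      case f1: False
      show ?thesis
      proof (cases "j < t")
        case True
        then have "V t j = -\<infinity>" using g t ij unfolding good_def by auto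
        moreover have "Amat \<kappa> l i t \<noteq> \<infinity>" by (simp add: Amat_def)
        ultimately show ?thesis using t by (cases "Amat \<kappa> l i t") auto
      next
        case False
        then show ?thesis using t f1 val comb_le[of i t j l rest] k
          by (auto simp del: of_nat_add intro!: mult_left_mono)
      qed
    qed
  next
    obtain t where t: "i \<le> t" "t \<le> j" "ind (i \<le> l \<and> l \<le> t) + Nlen rest t j = Nlen (l # rest) i j"
      using comb_ex ij by blast
    show "ereal (\<kappa> * real (Nlen (l # rest) i j)) \<in> (\<lambda>t. Amat \<kappa> l i t + V t j) ` {1..n}"
      using t ij val[of t] by (intro image_eqI[of _ _ t]) (auto simp del: of_nat_add)
  qed simp
next
  fix i j assume ij: "1 \<le> j \<and> j < i \<and> i \<le> n"
  show "trop_mult n (Amat \<kappa> l) V i j = -\<infinity>"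
    unfolding trop_mult_def
  proof (rule Max_eqI)
    fix y assume "y \<in> (\<lambda>t. Amat \<kappa> l i t + V t j) ` {1..n}"
    then obtain t where t: "1 \<le> t" "t \<le> n" "y = Amat \<kappa> l i t + V t j" by auto
    show "y \<le> -\<infinity>"
    proof (cases "t < i")
      case True
      have "V t j \<noteq> \<infinity>" using good_ninf[OF g] t ij by auto
      then show ?thesis using t True by (cases "V t j") (auto simp: Amat_def)
    next
      case False
      then have "V t j = -\<infinity>" using g t ij unfolding good_def by auto
      moreover have "Amat \<kappa> l i t \<noteq> \<infinity>" by (simp add: Amat_def)
      ultimately show ?thesis using t by (cases "Amat \<kappa> l i t") auto
    qed
  next
    show "-\<infinity> \<in> (\<lambda>t. Amat \<kappa> l i t + V t j) ` {1..n}"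
      using ij good_ninf[OF g, of 1 j] by (intro image_eqI[of _ _ 1]) (auto simp: Amat_def)
  qed simp
qed

lemma Amat_E: "1 \<le> i \<Longrightarrow> i \<le> n \<Longrightarrow> 1 \<le> j \<Longrightarrow> j \<le> n \<Longrightarrow> \<kappa> > 0 \<Longrightarrow>
   Amat \<kappa> l i j = trop_mult n (Amat \<kappa> l) Emat i j"
  unfolding trop_mult_def
proof (rule sym, rule Max_eqI)
  fix y assume "1 \<le> i" "i \<le> n" "1 \<le> j" "j \<le> n" "\<kappa> > 0"
    "y \<in> (\<lambda>t. Amat \<kappa> l i t + Emat t j) ` {1..n}"
  then show "y \<le> Amat \<kappa> l i j" by (auto simp: Amat_def Emat_def)
next
  assume "1 \<le> i" "i \<le> n" "1 \<le> j" "j \<le> n"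
  then show "Amat \<kappa> l i j \<in> (\<lambda>t. Amat \<kappa> l i t + Emat t j) ` {1..n}"
    by (intro image_eqI[of _ _ j]) (auto simp: Emat_def)
qed simp

lemma good_all:
  assumes "\<kappa> > 0" "\<forall>l\<in>set ls. 1 \<le> l \<and> l \<le> n"
  shows "good n \<kappa> ls (trop_prod n \<kappa> ls)"
  using assms(2)
proof (induction ls)
  case Nil
  then show ?case using good_E by simp
next
  case (Cons l rest)
  show ?case
  proof (cases rest)
    case Nil
    have "good n \<kappa> [l] (trop_mult n (Amat \<kappa> l) Emat)"
      using good_step[OF good_E assms(1)] Cons.prems by simp
    then show ?thesis using Nil
      by (auto intro: good_cong Amat_E[OF _ _ _ _ assms(1)])
  next
    case (Cons l' ls')
    then show ?thesis using good_step[OF _ assms(1)] Cons.IH \<open>\<forall>l\<in>set (l # rest). 1 \<le> l \<and> l \<le> n\<close>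
      by auto
  qed
qed

theorem mainTheorem5:
  fixes n :: nat and \<kappa> :: real and ls :: "nat list"
  assumes "n \<ge> 1" and "\<kappa> > 0" and "\<forall>l\<in>set ls. 1 \<le> l \<and> l \<le> n"
  shows "(\<forall>i j. 1 \<le> i \<and> i \<le> j \<and> j \<le> n \<longrightarrow>
            trop_prod n \<kappa> ls i j = ereal (\<kappa> * real (Nlen ls i j)))
       \<and> (\<forall>i j. 1 \<le> j \<and> j < i \<and> i \<le> n \<longrightarrow> trop_prod n \<kappa> ls i j = -\<infinity>)"
  using good_all[OF assms(2,3)] unfolding good_def .

end
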